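(* Let $G$ be a planar graph and let $D_1=\{v\in V(G):$ for all $A\subseteq V(G)\setminus\{v\}$ with $N(v)\subseteq N[A]$ we have $|A|>3\}$, $R_1=V(G)\setminus N[D_1]$ and $N_{R_1}(v)=N(v)\cap R_1$. For a set $D_2\subseteq V(G)$ let $R=V(G)\setminus N[D_1\cup D_2]$ and $d_R(v)=|N(v)\cap R|$. (1) If $G$ is triangle-free and $D_2=\bigcup_{v\in W}(\{v\}\cup B_v)$, where $B_v=\{z\in V(G)\setminus\{v\}: |N_{R_1}(v)\cap N_{R_1}(z)|\ge 7\}$ and $W=\{v: B_v\neq\emptyset\}$, then $d_R(v)\le 18$ for all $v\in V(G)$. (2) If $G$ has girth at least $5$ and $D_2=\emptyset$, then $d_R(v)\le 3$ for all $v\in V(G)$. (3) If $G$ is outerplanar and $D_2=\emptyset$, then $d_R(v)\le 9$ for all $v\in V(G)$.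
   Context: Graphs are finite, undirected and simple. $N(v)$ is the open neighbourhood of $v$, $N[v]=N(v)\cup\{v\}$, $N[A]=\bigcup_{a\in A}N[a]$. A graph is triangle-free if it has no cycle of length $3$; the girth is the length of a shortest cycle; a graph is outerplanar if it has a plane embedding with all vertices on the outer face. *)

theory Defs
  imports "HOL-Analysis.Analysis"
begin

definition simple_graph :: "'a set \<Rightarrow> 'a set set \<Rightarrow> bool" where
  "simple_graph V E \<longleftrightarrow> finite V \<and>
     (\<forall>e\<in>E. \<exists>u v. u \<in> V \<and> v \<in> V \<and> u \<noteq> v \<and> e = {u, v})"

definition nbhd :: "'a set \<Rightarrow> 'a set set \<Rightarrow> 'a \<Rightarrow> 'a set" where
  "nbhd V E v = {u \<in> V. {u, v} \<in> E}"

definition closed_nbhd_set :: "'a set \<Rightarrow> 'a set set \<Rightarrow> 'a set \<Rightarrow> 'a set" where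
  "closed_nbhd_set V E A = (\<Union>a\<in>A. insert a (nbhd V E a))"

definition has_cycle_of_length :: "'a set \<Rightarrow> 'a set set \<Rightarrow> nat \<Rightarrow> bool" where
  "has_cycle_of_length V E k \<longleftrightarrow> k \<ge> 3 \<and> (\<exists>xs. length xs = k \<and> distinct xs \<and> set xs \<subseteq> V \<and>
      (\<forall>i<k. {xs ! i, xs ! ((i + 1) mod k)} \<in> E))"

definition triangle_free :: "'a set \<Rightarrow> 'a set set \<Rightarrow> bool" where
  "triangle_free V E \<longleftrightarrow> \<not> has_cycle_of_length V E 3"

definition girth_at_least_5 :: "'a set \<Rightarrow> 'a set set \<Rightarrow> bool" where
  "girth_at_least_5 V E \<longleftrightarrow> (\<forall>k<5. \<not> has_cycle_of_length V E k)"

text \<open>Plane drawings: vertices as distinct points of the plane (complex numbers),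
  edges as arcs joining their end points, meeting the vertex points only at their
  ends, and two distinct edges meeting only in common end points.\<close>
definition plane_drawing :: "'a set \<Rightarrow> 'a set set \<Rightarrow> ('a \<Rightarrow> complex) \<Rightarrow> ('a set \<Rightarrow> real \<Rightarrow> complex) \<Rightarrow> bool" where
  "plane_drawing V E p c \<longleftrightarrow> inj_on p V \<and>
     (\<forall>e\<in>E. arc (c e) \<and> {pathstart (c e), pathfinish (c e)} = p ` e \<and>
              path_image (c e) \<inter> p ` V = p ` e) \<and>
     (\<forall>e\<in>E. \<forall>f\<in>E. e \<noteq> f \<longrightarrow> path_image (c e) \<inter> path_image (c f) \<subseteq> p ` (e \<inter> f))"

definition drawing_image :: "'a set \<Rightarrow> 'a set set \<Rightarrow> ('a \<Rightarrow> complex) \<Rightarrow> ('a set \<Rightarrow> real \<Rightarrow> complex) \<Rightarrow> complex set" where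
  "drawing_image V E p c = p ` V \<union> (\<Union>e\<in>E. path_image (c e))"

definition planar :: "'a set \<Rightarrow> 'a set set \<Rightarrow> bool" where
  "planar V E \<longleftrightarrow> (\<exists>p c. plane_drawing V E p c)"

text \<open>Outerplanar: a plane drawing with every vertex on the boundary of the outer
  (unbounded) face.\<close>
definition outerplanar :: "'a set \<Rightarrow> 'a set set \<Rightarrow> bool" where
  "outerplanar V E \<longleftrightarrow> (\<exists>p c. plane_drawing V E p c \<and>
      (\<forall>v\<in>V. p v \<in> closure (outside (drawing_image V E p c))))"

definition D1 :: "'a set \<Rightarrow> 'a set set \<Rightarrow> 'a set" where
  "D1 V E = {v \<in> V. \<forall>A. A \<subseteq> V - {v} \<and> nbhd V E v \<subseteq> closed_nbhd_set V E A \<longrightarrow> card A > 3}"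

definition R1 :: "'a set \<Rightarrow> 'a set set \<Rightarrow> 'a set" where
  "R1 V E = V - closed_nbhd_set V E (D1 V E)"

definition NR1 :: "'a set \<Rightarrow> 'a set set \<Rightarrow> 'a \<Rightarrow> 'a set" where
  "NR1 V E v = nbhd V E v \<inter> R1 V E"

definition Rset :: "'a set \<Rightarrow> 'a set set \<Rightarrow> 'a set \<Rightarrow> 'a set" where
  "Rset V E D2 = V - closed_nbhd_set V E (D1 V E \<union> D2)"

definition dR :: "'a set \<Rightarrow> 'a set set \<Rightarrow> 'a set \<Rightarrow> 'a \<Rightarrow> nat" where
  "dR V E D2 v = card (nbhd V E v \<inter> Rset V E D2)"

definition Bset :: "'a set \<Rightarrow> 'a set set \<Rightarrow> 'a \<Rightarrow> 'a set" where
  "Bset V E v = {z \<in> V - {v}. card (NR1 V E v \<inter> NR1 V E z) \<ge> 7}"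

definition Wset :: "'a set \<Rightarrow> 'a set set \<Rightarrow> 'a set" where
  "Wset V E = {v \<in> V. Bset V E v \<noteq> {}}"

definition D2_tf :: "'a set \<Rightarrow> 'a set set \<Rightarrow> 'a set" where
  "D2_tf V E = (\<Union>v\<in>Wset V E. insert v (Bset V E v))"

end

theory Submission
  imports Defs "HOL-Complex_Analysis.Winding_Numbers"
begin


lemma loop_facts:
  fixes c1 c2 :: "real \<Rightarrow> complex"
  assumes "arc c1" "arc c2" "pathstart c1 = a" "pathfinish c1 = b"
    "pathstart c2 = a" "pathfinish c2 = b" "path_image c1 \<inter> path_image c2 = {a,b}"
  shows "simple_path (c1 +++ reversepath c2)" "pathfinish (c1 +++ reversepath c2) = pathstart (c1 +++ reversepath c2)"
    "path_image (c1 +++ reversepath c2) = path_image c1 \<union> path_image c2"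
  using assms by (auto simp: simple_path_join_loop_eq path_image_join arc_reversepath)

lemma wn_loop:
  fixes c1 c2 :: "real \<Rightarrow> complex"
  assumes "arc c1" "arc c2" "pathfinish c1 = pathfinish c2"
    "z \<notin> path_image c1" "z \<notin> path_image c2"
  shows "winding_number (c1 +++ reversepath c2) z = winding_number c1 z - winding_number c2 z"
  using assms by (simp add: winding_number_join winding_number_reversepath arc_imp_path)

lemma conn_inside:
  fixes S :: "complex set"
  assumes "connected T" "T \<inter> S = {}" "T \<inter> inside S \<noteq> {}"
  shows "T \<subseteq> inside S"
proof -
  have "outside S \<inter> T = {}"
    using inside_outside_intersect_connected[of T S] assms by blast
  moreover have "T \<subseteq> - S" using assms(2) by blast
  ultimately show ?thesis using inside_Un_outside[of S] by blast
qed

lemma sub_inside: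
  fixes K I X :: "complex set"
  assumes "closed K" "connected I" "I \<inter> K = {}" "z \<in> I" "z \<in> inside K"
    "X \<subseteq> closure I" "X \<inter> K = {}"
  shows "X \<subseteq> inside K"
proof -
  have "I \<subseteq> inside K" using conn_inside[of I K] assms by blast
  then have "closure I \<subseteq> closure (inside K)" by (rule closure_mono)
  also have "\<dots> \<subseteq> K \<union> inside K" using closure_inside_subset[OF assms(1)] .
  finally show ?thesis using assms(6,7) by blast
qed

lemma theta_core:
  fixes c1 c2 c3 :: "real \<Rightarrow> complex"
  assumes a1: "arc c1" "pathstart c1 = a" "pathfinish c1 = b"
    and a2: "arc c2" "pathstart c2 = a" "pathfinish c2 = b"
    and a3: "arc c3" "pathstart c3 = a" "pathfinish c3 = b"
    and i12: "path_image c1 \<inter> path_image c2 = {a,b}"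
    and i13: "path_image c1 \<inter> path_image c3 = {a,b}"
    and i23: "path_image c2 \<inter> path_image c3 = {a,b}"
    and no3: "(path_image c3 - {a,b}) \<inter> inside (path_image c1 \<union> path_image c2) = {}"
  shows "path_image c1 - {a,b} \<subseteq> inside (path_image c2 \<union> path_image c3)
       \<or> path_image c2 - {a,b} \<subseteq> inside (path_image c1 \<union> path_image c3)"
proof -
  let ?g12 = "c1 +++ reversepath c2"
  let ?g13 = "c1 +++ reversepath c3"
  let ?g23 = "c2 +++ reversepath c3"
  note L12 = loop_facts[OF a1(1) a2(1) a1(2,3) a2(2,3) i12]
  note L13 = loop_facts[OF a1(1) a3(1) a1(2,3) a3(2,3) i13]
  note L23 = loop_facts[OF a2(1) a3(1) a2(2,3) a3(2,3) i23]
  note J12 = Jordan_inside_outside[OF L12(1,2)]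
  note J13 = Jordan_inside_outside[OF L13(1,2)]
  note J23 = Jordan_inside_outside[OF L23(1,2)]
  obtain z where z: "z \<in> inside (path_image c1 \<union> path_image c2)"
    using J12 L12(3) by auto
  have zn12: "z \<notin> path_image c1" "z \<notin> path_image c2"
    using z inside_no_overlap[of "path_image c1 \<union> path_image c2"] by blast+
  have abin: "a \<in> path_image c1" "b \<in> path_image c1"
    using i12 by auto
  have zn3: "z \<notin> path_image c3" using z no3 zn12 abin by blast
  have ins12_disj: "inside (path_image c1 \<union> path_image c2) \<inter> path_image c3 = {}"
    using no3 inside_no_overlap[of "path_image c1 \<union> path_image c2"] abin by blast
  have "winding_number ?g12 z \<noteq> 0"
    using simple_closed_path_norm_winding_number_inside[OF L12(1)] z L12(3) by fastforce
  then have w12: "winding_number c1 z - winding_number c2 z \<noteq> 0"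
    using wn_loop[OF a1(1) a2(1) _ zn12] a1 a2 by simp
  have e13: "winding_number ?g13 z = winding_number c1 z - winding_number c3 z"
    using wn_loop[OF a1(1) a3(1) _ zn12(1) zn3] a1 a3 by simp
  have e23: "winding_number ?g23 z = winding_number c2 z - winding_number c3 z"
    using wn_loop[OF a2(1) a3(1) _ zn12(2) zn3] a2 a3 by simp
  have cl12: "closed (path_image c1 \<union> path_image c2)"
    by (simp add: a1(1) a2(1) arc_imp_path closed_Un closed_path_image)
  have conn12: "connected (inside (path_image c1 \<union> path_image c2))"
    using J12 L12(3) by auto
  have fr12: "path_image c1 \<union> path_image c2 \<subseteq> closure (inside (path_image c1 \<union> path_image c2))"
    using J12 L12(3) frontier_def by (metis Diff_subset)
  consider "winding_number ?g13 z \<noteq> 0" | "winding_number ?g23 z \<noteq> 0"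
    using w12 e13 e23 by force
  then show ?thesis
  proof cases
    case 1
    have "z \<notin> outside (path_image c1 \<union> path_image c3)"
      using winding_number_zero_in_outside[OF simple_path_imp_path[OF L13(1)] L13(2)] 1 L13(3) by auto
    then have zi: "z \<in> inside (path_image c1 \<union> path_image c3)"
      using zn12 zn3 inside_Un_outside[of "path_image c1 \<union> path_image c3"] by blast
    have "path_image c2 - {a,b} \<subseteq> inside (path_image c1 \<union> path_image c3)"
    proof (rule sub_inside[OF _ conn12 _ z zi])
      show "closed (path_image c1 \<union> path_image c3)"
        by (simp add: a1(1) a3(1) arc_imp_path closed_Un closed_path_image)
      show "inside (path_image c1 \<union> path_image c2) \<inter> (path_image c1 \<union> path_image c3) = {}"
        using ins12_disj inside_no_overlap[of "path_image c1 \<union> path_image c2"] by blast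
      show "path_image c2 - {a, b} \<subseteq> closure (inside (path_image c1 \<union> path_image c2))"
        using fr12 by blast
      show "(path_image c2 - {a, b}) \<inter> (path_image c1 \<union> path_image c3) = {}"
        using i12 i23 by blast
    qed
    then show ?thesis by blast
  next
    case 2
    have "z \<notin> outside (path_image c2 \<union> path_image c3)"
      using winding_number_zero_in_outside[OF simple_path_imp_path[OF L23(1)] L23(2)] 2 L23(3) by auto
    then have zi: "z \<in> inside (path_image c2 \<union> path_image c3)"
      using zn12 zn3 inside_Un_outside[of "path_image c2 \<union> path_image c3"] by blast
    have "path_image c1 - {a,b} \<subseteq> inside (path_image c2 \<union> path_image c3)"
    proof (rule sub_inside[OF _ conn12 _ z zi])
      show "closed (path_image c2 \<union> path_image c3)"
        by (simp add: a2(1) a3(1) arc_imp_path closed_Un closed_path_image)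
      show "inside (path_image c1 \<union> path_image c2) \<inter> (path_image c2 \<union> path_image c3) = {}"
        using ins12_disj inside_no_overlap[of "path_image c1 \<union> path_image c2"] by blast
      show "path_image c1 - {a, b} \<subseteq> closure (inside (path_image c1 \<union> path_image c2))"
        using fr12 by blast
      show "(path_image c1 - {a, b}) \<inter> (path_image c2 \<union> path_image c3) = {}"
        using i12 i13 by blast
    qed
    then show ?thesis by blast
  qed
qed

lemma theta:
  fixes c1 c2 c3 :: "real \<Rightarrow> complex"
  assumes a1: "arc c1" "pathstart c1 = a" "pathfinish c1 = b"
    and a2: "arc c2" "pathstart c2 = a" "pathfinish c2 = b"
    and a3: "arc c3" "pathstart c3 = a" "pathfinish c3 = b"
    and i12: "path_image c1 \<inter> path_image c2 = {a,b}"
    and i13: "path_image c1 \<inter> path_image c3 = {a,b}"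
    and i23: "path_image c2 \<inter> path_image c3 = {a,b}"
  shows "path_image c1 - {a,b} \<subseteq> inside (path_image c2 \<union> path_image c3)
       \<or> path_image c2 - {a,b} \<subseteq> inside (path_image c1 \<union> path_image c3)
       \<or> path_image c3 - {a,b} \<subseteq> inside (path_image c1 \<union> path_image c2)"
proof (cases "(path_image c3 - {a,b}) \<inter> inside (path_image c1 \<union> path_image c2) = {}")
  case True
  then show ?thesis using theta_core[OF a1 a2 a3 i12 i13 i23] by blast
next
  case False
  have "connected (path_image c3 - {a,b})"
    using connected_simple_path_endless[OF arc_imp_simple_path[OF a3(1)]] a3 by simp
  moreover have "(path_image c3 - {a,b}) \<inter> (path_image c1 \<union> path_image c2) = {}"
    using i13 i23 by blast
  ultimately have "path_image c3 - {a,b} \<subseteq> inside (path_image c1 \<union> path_image c2)"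
    using conn_inside False by blast
  then show ?thesis by blast
qed


lemma ori:
  fixes g :: "real \<Rightarrow> complex"
  assumes "arc g" "{pathstart g, pathfinish g} = {P, Q}" "P \<noteq> Q"
  shows "\<exists>h. arc h \<and> pathstart h = P \<and> pathfinish h = Q \<and> path_image h = path_image g"
proof (cases "pathstart g = P")
  case True
  then have "pathfinish g = Q" using assms by (auto simp: doubleton_eq_iff)
  then show ?thesis using True assms by blast
next
  case False
  then have "pathstart g = Q" "pathfinish g = P" using assms by (auto simp: doubleton_eq_iff)
  then show ?thesis using assms
    by (intro exI[of _ "reversepath g"]) (auto simp: arc_reversepath)
qed

lemma pd_arc: "plane_drawing V E p c \<Longrightarrow> e \<in> E \<Longrightarrow> arc (c e)"
  unfolding plane_drawing_def by blast

lemma pd_ends: "plane_drawing V E p c \<Longrightarrow> e \<in> E \<Longrightarrow> {pathstart (c e), pathfinish (c e)} = p ` e"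
  unfolding plane_drawing_def by blast

lemma pd_img: "plane_drawing V E p c \<Longrightarrow> e \<in> E \<Longrightarrow> path_image (c e) \<inter> p ` V = p ` e"
  unfolding plane_drawing_def by blast

lemma pd_cross: "plane_drawing V E p c \<Longrightarrow> e \<in> E \<Longrightarrow> f \<in> E \<Longrightarrow> e \<noteq> f \<Longrightarrow>
   path_image (c e) \<inter> path_image (c f) \<subseteq> p ` (e \<inter> f)"
  unfolding plane_drawing_def by blast

lemma pd_inj: "plane_drawing V E p c \<Longrightarrow> inj_on p V"
  unfolding plane_drawing_def by blast

lemma twopath:
  assumes pd: "plane_drawing V E p c" and V: "x \<in> V" "w \<in> V" "y \<in> V"
    and d: "x \<noteq> w" "w \<noteq> y" "x \<noteq> y" and e: "{w,x} \<in> E" "{w,y} \<in> E"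
  shows "\<exists>P. arc P \<and> pathstart P = p x \<and> pathfinish P = p y \<and>
      path_image P = path_image (c {w,x}) \<union> path_image (c {w,y})"
proof -
  have inj: "inj_on p V" using pd_inj[OF pd] .
  have pxw: "p x \<noteq> p w" "p w \<noteq> p y" using inj V d by (auto dest: inj_onD)
  have c1: "arc (c {w,x})" "{pathstart (c {w,x}), pathfinish (c {w,x})} = {p x, p w}"
    using pd_arc[OF pd e(1)] pd_ends[OF pd e(1)] by (auto simp: insert_commute)
  have c2: "arc (c {w,y})" "{pathstart (c {w,y}), pathfinish (c {w,y})} = {p w, p y}"
    using pd_arc[OF pd e(2)] pd_ends[OF pd e(2)] by auto
  have ne: "{w,x} \<noteq> {w,y}" using d by (auto simp: doubleton_eq_iff)
  have int: "path_image (c {w,x}) \<inter> path_image (c {w,y}) \<subseteq> p ` ({w,x} \<inter> {w,y})"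
    using pd_cross[OF pd e ne] .
  also have "{w,x} \<inter> {w,y} = {w}" using d by auto
  finally have int': "path_image (c {w,x}) \<inter> path_image (c {w,y}) \<subseteq> {p w}" by simp
  obtain h1 where h1: "arc h1" "pathstart h1 = p x" "pathfinish h1 = p w" "path_image h1 = path_image (c {w,x})"
    using ori[OF c1 pxw(1)] by blast
  obtain h2 where h2: "arc h2" "pathstart h2 = p w" "pathfinish h2 = p y" "path_image h2 = path_image (c {w,y})"
    using ori[OF c2 pxw(2)] by blast
  have "arc (h1 +++ h2)" using arc_join[OF h1(1) h2(1)] h1 h2 int' by simp
  then show ?thesis using h1 h2 by (intro exI[of _ "h1 +++ h2"]) (auto simp: path_image_join)
qed

lemma no_K23:
  assumes sg: "simple_graph V E" and op: "outerplanar V E"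
    and V: "x \<in> V" "y \<in> V" "w1 \<in> V" "w2 \<in> V" "w3 \<in> V" and xy: "x \<noteq> y"
    and dw: "w1 \<noteq> w2" "w1 \<noteq> w3" "w2 \<noteq> w3"
    and nx: "w1 \<notin> {x,y}" "w2 \<notin> {x,y}" "w3 \<notin> {x,y}"
    and e: "{w1,x} \<in> E" "{w1,y} \<in> E" "{w2,x} \<in> E" "{w2,y} \<in> E" "{w3,x} \<in> E" "{w3,y} \<in> E"
  shows False
proof -
  obtain p c where pd: "plane_drawing V E p c"
    and cl: "\<forall>v\<in>V. p v \<in> closure (outside (drawing_image V E p c))"
    using op unfolding outerplanar_def by blast
  have inj: "inj_on p V" using pd_inj[OF pd] .
  have cross: "path_image (c e1) \<inter> path_image (c e2) \<subseteq> p ` (e1 \<inter> e2)"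
    if "e1 \<in> E" "e2 \<in> E" "e1 \<noteq> e2" for e1 e2
    using pd_cross[OF pd that] .
  have endp: "p ` e1 \<subseteq> path_image (c e1)" if "e1 \<in> E" for e1
    using pd_img[OF pd that] by blast
  have gen: "(path_image (c {wi,x}) \<union> path_image (c {wi,y})) \<inter> (path_image (c {wj,x}) \<union> path_image (c {wj,y})) \<subseteq> {p x, p y}"
    if "wi \<noteq> wj" "wi \<notin> {x,y}" "wj \<notin> {x,y}" "{wi,x} \<in> E" "{wi,y} \<in> E" "{wj,x} \<in> E" "{wj,y} \<in> E" for wi wj
  proof -
    have ne: "{wi,x} \<noteq> {wj,x}" "{wi,x} \<noteq> {wj,y}" "{wi,y} \<noteq> {wj,x}" "{wi,y} \<noteq> {wj,y}"
      using that xy by (auto simp: doubleton_eq_iff)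
    have s: "{wi,x} \<inter> {wj,x} \<subseteq> {x,y}" "{wi,x} \<inter> {wj,y} \<subseteq> {x,y}"
       "{wi,y} \<inter> {wj,x} \<subseteq> {x,y}" "{wi,y} \<inter> {wj,y} \<subseteq> {x,y}"
      using that by auto
    have sx: "p ` A \<subseteq> {p x, p y}" if "A \<subseteq> {x,y}" for A using that by auto
    have "path_image (c {wi,x}) \<inter> path_image (c {wj,x}) \<subseteq> {p x, p y}"
      using subset_trans[OF cross[OF that(4) that(6) ne(1)] sx[OF s(1)]] .
    moreover have "path_image (c {wi,x}) \<inter> path_image (c {wj,y}) \<subseteq> {p x, p y}"
      using subset_trans[OF cross[OF that(4) that(7) ne(2)] sx[OF s(2)]] .
    moreover have "path_image (c {wi,y}) \<inter> path_image (c {wj,x}) \<subseteq> {p x, p y}"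
      using subset_trans[OF cross[OF that(5) that(6) ne(3)] sx[OF s(3)]] .
    moreover have "path_image (c {wi,y}) \<inter> path_image (c {wj,y}) \<subseteq> {p x, p y}"
      using subset_trans[OF cross[OF that(5) that(7) ne(4)] sx[OF s(4)]] .
    ultimately show ?thesis by blast
  qed
  have fin: "p wi \<notin> inside (path_image Q1 \<union> path_image Q2)"
    if "wi \<in> V" "path_image Q1 \<union> path_image Q2 \<subseteq> drawing_image V E p c" "arc Q1" "arc Q2"
    for wi and Q1 Q2 :: "real \<Rightarrow> complex"
  proof
    assume a: "p wi \<in> inside (path_image Q1 \<union> path_image Q2)"
    have "closed (path_image Q1 \<union> path_image Q2)"
      using that by (simp add: arc_imp_path closed_Un closed_path_image)
    then have o: "open (inside (path_image Q1 \<union> path_image Q2))" by (rule open_inside)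
    have "outside (drawing_image V E p c) \<subseteq> outside (path_image Q1 \<union> path_image Q2)"
      using outside_mono[OF that(2)] .
    then have "inside (path_image Q1 \<union> path_image Q2) \<inter> outside (drawing_image V E p c) = {}"
      using inside_Int_outside[of "path_image Q1 \<union> path_image Q2"] by blast
    then have "inside (path_image Q1 \<union> path_image Q2) \<inter> closure (outside (drawing_image V E p c)) = {}"
      using open_Int_closure_eq_empty[OF o] by blast
    then show False using a cl that(1) by blast
  qed
  have vne: "x \<noteq> w1" "w1 \<noteq> y" "x \<noteq> w2" "w2 \<noteq> y" "x \<noteq> w3" "w3 \<noteq> y" using nx by auto
  obtain P1 where P1: "arc P1" "pathstart P1 = p x" "pathfinish P1 = p y"
      "path_image P1 = path_image (c {w1,x}) \<union> path_image (c {w1,y})"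
    using twopath[OF pd V(1) V(3) V(2) vne(1,2) xy e(1,2)] by blast
  obtain P2 where P2: "arc P2" "pathstart P2 = p x" "pathfinish P2 = p y"
      "path_image P2 = path_image (c {w2,x}) \<union> path_image (c {w2,y})"
    using twopath[OF pd V(1) V(4) V(2) vne(3,4) xy e(3,4)] by blast
  obtain P3 where P3: "arc P3" "pathstart P3 = p x" "pathfinish P3 = p y"
      "path_image P3 = path_image (c {w3,x}) \<union> path_image (c {w3,y})"
    using twopath[OF pd V(1) V(5) V(2) vne(5,6) xy e(5,6)] by blast
  have ends: "{p x, p y} \<subseteq> path_image P" if "pathstart P = p x" "pathfinish P = p y" for P :: "real \<Rightarrow> complex"
    using pathstart_in_path_image[of P] pathfinish_in_path_image[of P] that by simp
  have g12: "path_image P1 \<inter> path_image P2 \<subseteq> {p x, p y}"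
    unfolding P1(4) P2(4) by (rule gen[OF dw(1) nx(1,2) e(1-4)])
  have g13: "path_image P1 \<inter> path_image P3 \<subseteq> {p x, p y}"
    unfolding P1(4) P3(4) by (rule gen[OF dw(2) nx(1,3) e(1,2,5,6)])
  have g23: "path_image P2 \<inter> path_image P3 \<subseteq> {p x, p y}"
    unfolding P2(4) P3(4) by (rule gen[OF dw(3) nx(2,3) e(3-6)])
  note E1 = ends[OF P1(2,3)] and E2 = ends[OF P2(2,3)] and E3 = ends[OF P3(2,3)]
  have i12: "path_image P1 \<inter> path_image P2 = {p x, p y}"
    using g12 E1 E2 by blast
  have i13: "path_image P1 \<inter> path_image P3 = {p x, p y}"
    using g13 E1 E3 by blast
  have i23: "path_image P2 \<inter> path_image P3 = {p x, p y}"
    using g23 E2 E3 by blast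
  have pne: "p w \<noteq> p x \<and> p w \<noteq> p y" if "w \<in> V" "w \<notin> {x,y}" for w
    using that V(1,2) inj unfolding inj_on_def by blast
  have pin: "p w \<in> path_image (c {w,x})" if "{w,x} \<in> E" for w
    using endp[OF that] by blast
  have pw: "p w1 \<in> path_image P1 - {p x, p y}" "p w2 \<in> path_image P2 - {p x, p y}"
     "p w3 \<in> path_image P3 - {p x, p y}"
    using pin[OF e(1)] pin[OF e(3)] pin[OF e(5)] pne[OF V(3) nx(1)] pne[OF V(4) nx(2)] pne[OF V(5) nx(3)]
      P1(4) P2(4) P3(4) by auto
  have sub: "path_image P \<subseteq> drawing_image V E p c"
    if "path_image P = path_image (c {w,x}) \<union> path_image (c {w,y})" "{w,x} \<in> E" "{w,y} \<in> E"
    for P :: "real \<Rightarrow> complex" and w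
    using that unfolding drawing_image_def by blast
  have s1: "path_image P1 \<subseteq> drawing_image V E p c" using sub[OF P1(4) e(1,2)] .
  have s2: "path_image P2 \<subseteq> drawing_image V E p c" using sub[OF P2(4) e(3,4)] .
  have s3: "path_image P3 \<subseteq> drawing_image V E p c" using sub[OF P3(4) e(5,6)] .
  have s23: "path_image P2 \<union> path_image P3 \<subseteq> drawing_image V E p c" using s2 s3 by (rule Un_least)
  have s13: "path_image P1 \<union> path_image P3 \<subseteq> drawing_image V E p c" using s1 s3 by (rule Un_least)
  have s12: "path_image P1 \<union> path_image P2 \<subseteq> drawing_image V E p c" using s1 s2 by (rule Un_least)
  note f1 = fin[OF V(3) s23 P2(1) P3(1)]
  note f2 = fin[OF V(4) s13 P1(1) P3(1)]
  note f3 = fin[OF V(5) s12 P1(1) P2(1)]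
  from theta[OF P1(1-3) P2(1-3) P3(1-3) i12 i13 i23]
  show False
  proof (elim disjE)
    assume "path_image P1 - {p x, p y} \<subseteq> inside (path_image P2 \<union> path_image P3)"
    then show False using pw(1) f1 by blast 
  next
    assume "path_image P2 - {p x, p y} \<subseteq> inside (path_image P1 \<union> path_image P3)"
    then show False using pw(2) f2 by blast
  next
    assume "path_image P3 - {p x, p y} \<subseteq> inside (path_image P1 \<union> path_image P2)"
    then show False using pw(3) f3 by blast
  qed
qed


lemma nb_iff: "u \<in> nbhd V E v \<longleftrightarrow> u \<in> V \<and> {u,v} \<in> E"
  by (simp add: nbhd_def)

lemma nb_ne: "simple_graph V E \<Longrightarrow> u \<in> nbhd V E v \<Longrightarrow> u \<noteq> v"
  unfolding simple_graph_def nbhd_def by (auto simp: doubleton_eq_iff)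

lemma nb_V: "simple_graph V E \<Longrightarrow> {u,v} \<in> E \<Longrightarrow> v \<in> V"
  unfolding simple_graph_def by (auto simp: doubleton_eq_iff)

lemma fin_nb: "simple_graph V E \<Longrightarrow> finite (nbhd V E v)"
  unfolding simple_graph_def nbhd_def by auto

lemma count:
  assumes "finite A" "card A \<le> 3" "S \<subseteq> (\<Union>a\<in>A. f a)" "finite S"
    "\<And>a. a \<in> A \<Longrightarrow> card (f a \<inter> S) \<le> k"
  shows "card S \<le> 3 * k"
proof -
  have "S = (\<Union>a\<in>A. f a \<inter> S)" using assms(3) by blast
  then have "card S \<le> (\<Sum>a\<in>A. card (f a \<inter> S))"
    using card_UN_le[OF assms(1), of "\<lambda>a. f a \<inter> S"] by simp
  also have "\<dots> \<le> (\<Sum>a\<in>A. k)" by (rule sum_mono) (use assms(5) in auto)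
  also have "\<dots> = card A * k" by simp
  also have "\<dots> \<le> 3 * k" using assms(2) by simp
  finally show ?thesis .
qed

lemma zero_case:
  assumes "v \<in> D1 V E \<union> D2"
  shows "dR V E D2 v = 0"
proof -
  have "nbhd V E v \<inter> Rset V E D2 = {}"
    using assms unfolding Rset_def closed_nbhd_set_def by blast
  then show ?thesis by (simp add: dR_def)
qed

lemma nonD1:
  assumes "v \<in> V" "v \<notin> D1 V E"
  obtains A where "A \<subseteq> V - {v}" "nbhd V E v \<subseteq> closed_nbhd_set V E A" "card A \<le> 3"
proof -
  from assms obtain A where "A \<subseteq> V - {v}" "nbhd V E v \<subseteq> closed_nbhd_set V E A" "\<not> card A > 3"
    unfolding D1_def by blast
  then show ?thesis using that by simp
qed

lemma three:
  assumes "finite S" "3 \<le> card S"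
  obtains w1 w2 w3 where "w1 \<in> S" "w2 \<in> S" "w3 \<in> S" "w1 \<noteq> w2" "w1 \<noteq> w3" "w2 \<noteq> w3"
proof -
  obtain w1 where w1: "w1 \<in> S" using assms by fastforce
  have "2 \<le> card (S - {w1})" using assms w1 by simp
  then have "S - {w1} \<noteq> {}" by (metis card.empty not_numeral_le_zero)
  then obtain w2 where w2: "w2 \<in> S - {w1}" by blast
  have "1 \<le> card (S - {w1} - {w2})" using assms w1 w2 by (simp add: card_Diff_singleton)
  then have "S - {w1} - {w2} \<noteq> {}" by (metis card.empty not_one_le_zero)
  then obtain w3 where w3: "w3 \<in> S - {w1} - {w2}" by blast
  show ?thesis using that w1 w2 w3 by blast
qed

lemma cyc3:
  assumes "a \<in> V" "b \<in> V" "c \<in> V" "a \<noteq> b" "a \<noteq> c" "b \<noteq> c"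
    "{a,b} \<in> E" "{b,c} \<in> E" "{c,a} \<in> E"
  shows "has_cycle_of_length V E 3"
proof -
  have "\<forall>i<3. {[a,b,c] ! i, [a,b,c] ! ((i + 1) mod 3)} \<in> E"
  proof (intro allI impI)
    fix i :: nat assume "i < 3"
    then have "i = 0 \<or> i = 1 \<or> i = 2" by linarith
    then show "{[a,b,c] ! i, [a,b,c] ! ((i + 1) mod 3)} \<in> E"
      by (elim disjE) (simp_all add: assms)
  qed
  moreover have "distinct [a,b,c]" "set [a,b,c] \<subseteq> V" "length [a,b,c] = 3" using assms by auto
  ultimately show ?thesis unfolding has_cycle_of_length_def by blast
qed

lemma cyc4:
  assumes "a \<in> V" "b \<in> V" "c \<in> V" "d \<in> V" "distinct [a,b,c,d]"
    "{a,b} \<in> E" "{b,c} \<in> E" "{c,d} \<in> E" "{d,a} \<in> E"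
  shows "has_cycle_of_length V E 4"
proof -
  have "\<forall>i<4. {[a,b,c,d] ! i, [a,b,c,d] ! ((i + 1) mod 4)} \<in> E"
  proof (intro allI impI)
    fix i :: nat assume "i < 4"
    then have "i = 0 \<or> i = 1 \<or> i = 2 \<or> i = 3" by linarith
    then show "{[a,b,c,d] ! i, [a,b,c,d] ! ((i + 1) mod 4)} \<in> E"
      by (elim disjE) (simp_all add: assms)
  qed
  moreover have "set [a,b,c,d] \<subseteq> V" "length [a,b,c,d] = 4" using assms by auto
  ultimately show ?thesis unfolding has_cycle_of_length_def using assms(5)
    by (intro conjI exI[of _ "[a,b,c,d]"]) simp_all
qed

lemma edge_sym: "{a,b} \<in> E \<Longrightarrow> {b,a} \<in> E"
  by (simp add: insert_commute)

lemma part2_local: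
  assumes sg: "simple_graph V E" and g: "girth_at_least_5 V E" and a: "a \<in> V" "a \<noteq> v"
  shows "card (insert a (nbhd V E a) \<inter> nbhd V E v) \<le> 1"
proof -
  have n3: "\<not> has_cycle_of_length V E 3" and n4: "\<not> has_cycle_of_length V E 4"
    using g unfolding girth_at_least_5_def by auto
  have fin: "finite (insert a (nbhd V E a) \<inter> nbhd V E v)" using fin_nb[OF sg] by blast
  have "\<forall>u1\<in>insert a (nbhd V E a) \<inter> nbhd V E v. \<forall>u2\<in>insert a (nbhd V E a) \<inter> nbhd V E v. u1 = u2"
  proof (intro ballI, rule ccontr)
    fix u1 u2 assume u1: "u1 \<in> insert a (nbhd V E a) \<inter> nbhd V E v"
      and u2: "u2 \<in> insert a (nbhd V E a) \<inter> nbhd V E v" and ne: "u1 \<noteq> u2"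
    have vV: "v \<in> V" using u1 nb_V[OF sg] by (auto simp: nb_iff)
    have triangle: False if "a \<in> nbhd V E v" "u \<in> nbhd V E a" "u \<in> nbhd V E v" for u
    proof -
      have "u \<noteq> a" "u \<noteq> v" using nb_ne[OF sg] that by auto
      have e: "{v,a} \<in> E" "{a,u} \<in> E" "{u,v} \<in> E" "u \<in> V"
        using that by (simp_all add: nb_iff edge_sym)
      have "has_cycle_of_length V E 3"
        by (rule cyc3[OF vV a(1) e(4) a(2)[symmetric] _ _ e(1-3)]) (use \<open>u \<noteq> a\<close> \<open>u \<noteq> v\<close> in auto)
      then show False using n3 by blast
    qed
    show False
    proof (cases "u1 = a \<or> u2 = a")
      case True
      then show ?thesis using u1 u2 ne triangle by blast
    next
      case False
      then have "u1 \<in> nbhd V E a" "u2 \<in> nbhd V E a" "u1 \<in> nbhd V E v" "u2 \<in> nbhd V E v"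
        using u1 u2 by auto
      moreover have "u1 \<noteq> v" "u2 \<noteq> v" using nb_ne[OF sg] calculation by auto
      ultimately have e: "{v,u1} \<in> E" "{u1,a} \<in> E" "{a,u2} \<in> E" "{u2,v} \<in> E" "u1 \<in> V" "u2 \<in> V"
        by (simp_all add: nb_iff edge_sym)
      have d: "distinct [v,u1,a,u2]" using ne False a(2) \<open>u1 \<noteq> v\<close> \<open>u2 \<noteq> v\<close> by auto
      have "has_cycle_of_length V E 4"
        by (rule cyc4[OF vV e(5) a(1) e(6) d e(1-4)])
      then show False using n4 by blast
    qed
  qed
  then show ?thesis using card_le_Suc0_iff_eq[OF fin] by simp
qed

lemma part3_local:
  assumes sg: "simple_graph V E" and op: "outerplanar V E" and a: "a \<in> V" "a \<noteq> v" and vV: "v \<in> V"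
  shows "card (insert a (nbhd V E a) \<inter> nbhd V E v) \<le> 3"
proof -
  have fin: "finite (nbhd V E a \<inter> nbhd V E v)" using fin_nb[OF sg] by blast
  have "card (nbhd V E a \<inter> nbhd V E v) \<le> 2"
  proof (rule ccontr)
    assume "\<not> ?thesis"
    then have "3 \<le> card (nbhd V E a \<inter> nbhd V E v)" by simp
    then obtain w1 w2 w3 where w: "w1 \<in> nbhd V E a \<inter> nbhd V E v" "w2 \<in> nbhd V E a \<inter> nbhd V E v"
      "w3 \<in> nbhd V E a \<inter> nbhd V E v" "w1 \<noteq> w2" "w1 \<noteq> w3" "w2 \<noteq> w3"
      using three[OF fin] by metis
    have nx: "w1 \<notin> {a,v}" "w2 \<notin> {a,v}" "w3 \<notin> {a,v}" using w nb_ne[OF sg] by blast+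
    show False
      using no_K23[OF sg op a(1) vV _ _ _ a(2) w(4,5,6) nx] w by (auto simp: nb_iff)
  qed
  moreover have "insert a (nbhd V E a) \<inter> nbhd V E v \<subseteq> insert a (nbhd V E a \<inter> nbhd V E v)" by blast
  then have "card (insert a (nbhd V E a) \<inter> nbhd V E v) \<le> card (insert a (nbhd V E a \<inter> nbhd V E v))"
    using fin by (intro card_mono) auto
  moreover have "card (insert a (nbhd V E a \<inter> nbhd V E v)) \<le> Suc (card (nbhd V E a \<inter> nbhd V E v))"
    using card_insert_le_m1 fin by (simp add: card_insert_if)
  ultimately show ?thesis by linarith
qed

lemma part1_local:
  assumes sg: "simple_graph V E" and tf: "triangle_free V E" and a: "a \<in> V" "a \<noteq> v"
    and vV: "v \<in> V" and nD2: "v \<notin> D2_tf V E"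
  shows "card (insert a (nbhd V E a) \<inter> nbhd V E v \<inter> Rset V E (D2_tf V E)) \<le> 6"
proof (rule ccontr)
  let ?S = "insert a (nbhd V E a) \<inter> nbhd V E v \<inter> Rset V E (D2_tf V E)"
  assume "\<not> ?thesis"
  then have c7: "7 \<le> card ?S" by simp
  have n3: "\<not> has_cycle_of_length V E 3" using tf unfolding triangle_free_def .
  show False
  proof (cases "a \<in> nbhd V E v")
    case True
    have "?S \<subseteq> {a}"
    proof
      fix u assume u: "u \<in> ?S"
      show "u \<in> {a}"
      proof (rule ccontr)
        assume "u \<notin> {a}"
        then have ua: "u \<in> nbhd V E a" "u \<in> nbhd V E v" "u \<noteq> a" using u by auto
        have "u \<noteq> v" using nb_ne[OF sg] ua by auto
        have e: "{v,a} \<in> E" "{a,u} \<in> E" "{u,v} \<in> E" "u \<in> V"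
          using True ua by (simp_all add: nb_iff edge_sym)
        have "has_cycle_of_length V E 3"
          by (rule cyc3[OF vV a(1) e(4) a(2)[symmetric] _ _ e(1-3)]) (use \<open>u \<noteq> a\<close> \<open>u \<noteq> v\<close> in auto)
        then show False using n3 by blast
      qed
    qed
    then have "card ?S \<le> 1" using card_mono[of "{a}" ?S] by simp
    then show False using c7 by simp
  next
    case False
    have "?S \<subseteq> NR1 V E v \<inter> NR1 V E a"
    proof
      fix u assume u: "u \<in> ?S"
      then have "u \<noteq> a" using False by auto
      then have "u \<in> nbhd V E a" using u by auto
      moreover have "Rset V E (D2_tf V E) \<subseteq> R1 V E"
        unfolding Rset_def R1_def closed_nbhd_set_def by blast
      ultimately show "u \<in> NR1 V E v \<inter> NR1 V E a" using u unfolding NR1_def by blast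
    qed
    moreover have "finite (NR1 V E v \<inter> NR1 V E a)" using fin_nb[OF sg] unfolding NR1_def by blast
    ultimately have "7 \<le> card (NR1 V E v \<inter> NR1 V E a)" using c7 card_mono[of _ ?S] by (meson order_trans)
    then have "a \<in> Bset V E v" using a unfolding Bset_def by blast
    then have "v \<in> D2_tf V E" using vV unfolding Wset_def D2_tf_def by blast
    then show False using nD2 by blast
  qed
qed

theorem lemma42:
  fixes V :: "'a set" and E :: "'a set set"
  assumes "simple_graph V E" and "planar V E"
  shows "(triangle_free V E \<longrightarrow> (\<forall>v\<in>V. dR V E (D2_tf V E) v \<le> 18))
       \<and> (girth_at_least_5 V E \<longrightarrow> (\<forall>v\<in>V. dR V E {} v \<le> 3))
       \<and> (outerplanar V E \<longrightarrow> (\<forall>v\<in>V. dR V E {} v \<le> 9))"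
proof (intro conjI impI ballI)
  note sg = assms(1)
  have finV: "finite V" using sg unfolding simple_graph_def by blast
  fix v assume vV: "v \<in> V"
  have finS: "finite (nbhd V E v \<inter> X)" for X using fin_nb[OF sg, of v] by simp
  {
    assume tf: "triangle_free V E"
    show "dR V E (D2_tf V E) v \<le> 18"
    proof (cases "v \<in> D1 V E \<union> D2_tf V E")
      case True then show ?thesis by (simp add: zero_case[OF True])
    next
      case False
      then obtain A where A: "A \<subseteq> V - {v}" "nbhd V E v \<subseteq> closed_nbhd_set V E A" "card A \<le> 3"
        using nonD1[OF vV] by blast
      have "card (nbhd V E v \<inter> Rset V E (D2_tf V E)) \<le> 3 * 6"
      proof (rule count[OF _ A(3)])
        show "finite A" using finite_subset[OF A(1)] finV by simp
        show "nbhd V E v \<inter> Rset V E (D2_tf V E) \<subseteq> (\<Union>a\<in>A. insert a (nbhd V E a))"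
          using A(2) unfolding closed_nbhd_set_def by blast
        show "finite (nbhd V E v \<inter> Rset V E (D2_tf V E))" by (rule finS)
        fix a assume "a \<in> A"
        then have "a \<in> V" "a \<noteq> v" using A(1) by auto
        from part1_local[OF sg tf this vV] False
        show "card (insert a (nbhd V E a) \<inter> (nbhd V E v \<inter> Rset V E (D2_tf V E))) \<le> 6"
          by (simp add: Int_assoc)
      qed
      then show ?thesis by (simp add: dR_def)
    qed
  }
  {
    assume g: "girth_at_least_5 V E"
    show "dR V E {} v \<le> 3"
    proof (cases "v \<in> D1 V E \<union> {}")
      case True then show ?thesis by (simp add: zero_case[OF True])
    next
      case False
      then obtain A where A: "A \<subseteq> V - {v}" "nbhd V E v \<subseteq> closed_nbhd_set V E A" "card A \<le> 3"
        using nonD1[OF vV] by blast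
      have "card (nbhd V E v \<inter> Rset V E {}) \<le> 3 * 1"
      proof (rule count[OF _ A(3)])
        show "finite A" using finite_subset[OF A(1)] finV by simp
        show "nbhd V E v \<inter> Rset V E {} \<subseteq> (\<Union>a\<in>A. insert a (nbhd V E a))"
          using A(2) unfolding closed_nbhd_set_def by blast
        show "finite (nbhd V E v \<inter> Rset V E {})" by (rule finS)
        fix a assume "a \<in> A"
        then have "a \<in> V" "a \<noteq> v" using A(1) by auto
        have "card (insert a (nbhd V E a) \<inter> (nbhd V E v \<inter> Rset V E {}))
            \<le> card (insert a (nbhd V E a) \<inter> nbhd V E v)"
          by (rule card_mono) (use fin_nb[OF sg] in auto)
        then show "card (insert a (nbhd V E a) \<inter> (nbhd V E v \<inter> Rset V E {})) \<le> 1"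
          using part2_local[OF sg g \<open>a \<in> V\<close> \<open>a \<noteq> v\<close>] by linarith
      qed
      then show ?thesis by (simp add: dR_def)
    qed
  }
  {
    assume op: "outerplanar V E"
    show "dR V E {} v \<le> 9"
    proof (cases "v \<in> D1 V E \<union> {}")
      case True then show ?thesis by (simp add: zero_case[OF True])
    next
      case False
      then obtain A where A: "A \<subseteq> V - {v}" "nbhd V E v \<subseteq> closed_nbhd_set V E A" "card A \<le> 3"
        using nonD1[OF vV] by blast
      have "card (nbhd V E v \<inter> Rset V E {}) \<le> 3 * 3"
      proof (rule count[OF _ A(3)])
        show "finite A" using finite_subset[OF A(1)] finV by simp
        show "nbhd V E v \<inter> Rset V E {} \<subseteq> (\<Union>a\<in>A. insert a (nbhd V E a))"
          using A(2) unfolding closed_nbhd_set_def by blast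
        show "finite (nbhd V E v \<inter> Rset V E {})" by (rule finS)
        fix a assume "a \<in> A"
        then have "a \<in> V" "a \<noteq> v" using A(1) by auto
        have "card (insert a (nbhd V E a) \<inter> (nbhd V E v \<inter> Rset V E {}))
            \<le> card (insert a (nbhd V E a) \<inter> nbhd V E v)"
          by (rule card_mono) (use fin_nb[OF sg] in auto)
        then show "card (insert a (nbhd V E a) \<inter> (nbhd V E v \<inter> Rset V E {})) \<le> 3"
          using part3_local[OF sg op \<open>a \<in> V\<close> \<open>a \<noteq> v\<close> vV] by linarith
      qed
      then show ?thesis by (simp add: dR_def)
    qed
  }
qed


end
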